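(* Let $r=r(n)\ge5$ be an integer-valued function with $r=o(n^{1/8})$. Then there is a function $\varepsilon(n)\to0$ such that for every $n$, every independent set $A$ of $G(n,r,1)$ and every choice of $A_0$ as in the context, $$\sum_{i\ge2}|A_i|\le\varepsilon(n)\binom{n-2}{r-2}.$$
   Context: $G(n,r,1)$ is the graph on $[n]^{(r)}$ in which two $r$-subsets are adjacent iff they intersect in exactly one element. Given an independent set $A$, let $A_0=\{v_1,\dots,v_k\}\subset A$ be a subfamily of pairwise disjoint sets of maximum possible cardinality, and for $i\ge1$ let $A_i$ be the set of $v\in A\setminus A_0$ that intersect exactly $i$ of the sets $v_1,\dots,v_k$. *)

theory Defs
  imports Complex_Main "HOL-Library.Landau_Symbols"
begin

definition rsubsets :: "nat \<Rightarrow> nat \<Rightarrow> nat set set" where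
  "rsubsets n r = {S. S \<subseteq> {1..n} \<and> card S = r}"

definition adj_Gnr1 :: "nat set \<Rightarrow> nat set \<Rightarrow> bool" where
  "adj_Gnr1 S T \<longleftrightarrow> S \<noteq> T \<and> card (S \<inter> T) = 1"

definition indep_Gnr1 :: "nat \<Rightarrow> nat \<Rightarrow> nat set set \<Rightarrow> bool" where
  "indep_Gnr1 n r A \<longleftrightarrow> A \<subseteq> rsubsets n r \<and> (\<forall>S\<in>A. \<forall>T\<in>A. \<not> adj_Gnr1 S T)"

definition max_disjoint_subfamily :: "nat set set \<Rightarrow> nat set set \<Rightarrow> bool" where
  "max_disjoint_subfamily A A0 \<longleftrightarrow>
     A0 \<subseteq> A \<and> pairwise disjnt A0 \<and>
     (\<forall>B. B \<subseteq> A \<and> pairwise disjnt B \<longrightarrow> card B \<le> card A0)"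

definition A_layer :: "nat set set \<Rightarrow> nat set set \<Rightarrow> nat \<Rightarrow> nat set set" where
  "A_layer A A0 i = {v \<in> A - A0. card {u \<in> A0. u \<inter> v \<noteq> {}} = i}"

end

theory Submission
  imports Defs
begin


lemma binom_ratio:
  assumes "2 \<le> j" "j \<le> r" "r \<le> n"
  shows "real ((n-j) choose (r-j)) \<le> (real r / real n)^(j-2) * real ((n-2) choose (r-2))"
  using assms
proof (induction j rule: nat_induct_at_least)
  case base then show ?case by simp
next
  case (Suc j)
  have n0: "n > 0" using Suc by simp
  obtain a where a: "n - j = Suc a" using Suc by (metis Suc_diff_Suc Suc_le_lessD le_trans less_or_eq_imp_le)
  obtain b where b: "r - j = Suc b" using Suc by (metis Suc_diff_Suc Suc_le_lessD)
  have ab1: "n - Suc j = a" "r - Suc j = b" using a b by auto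
  have eq: "real (Suc b) * real (Suc a choose Suc b) = real (Suc a) * real (a choose b)"
    using binomial_absorption[of b "Suc a"] by (metis diff_Suc_1 of_nat_mult)
  have "real b + 1 \<le> (real r / real n) * (real a + 1)"
  proof -
    have "real (r - j) * real n \<le> real r * real (n - j)"
      using Suc by (simp add: of_nat_diff algebra_simps)
    then show ?thesis using a b n0 by (simp add: field_simps)
  qed
  have IH: "real (Suc a choose Suc b) \<le> (real r / real n)^(j-2) * real ((n-2) choose (r-2))"
    using Suc a b by simp
  have "real (a choose b) * (real a + 1) = (real b + 1) * real (Suc a choose Suc b)"
    using eq by (simp add: algebra_simps)
  also have "\<dots> \<le> ((real r / real n) * (real a + 1)) * real (Suc a choose Suc b)"
    by (rule mult_right_mono) (fact, simp)
  finally have "real (a choose b) * (real a + 1) \<le> ((real r / real n) * real (Suc a choose Suc b)) * (real a + 1)"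
    by (simp only: mult_ac)
  then have "real (a choose b) \<le> (real r / real n) * real (Suc a choose Suc b)"
    by (rule mult_right_le_imp_le) simp
  also have "\<dots> \<le> (real r / real n) * ((real r / real n)^(j-2) * real ((n-2) choose (r-2)))"
    by (rule mult_left_mono[OF IH]) simp
  moreover have "Suc j - 2 = Suc (j - 2)" using Suc by simp
  ultimately show ?case using ab1 by (simp only: power_Suc mult.assoc)
qed

lemma rsub_fin: "finite (rsubsets n r)"
  unfolding rsubsets_def by (rule finite_subset[of _ "Pow {1..n}"]) auto

lemma count_eq:
  assumes "T \<subseteq> {1..n}" "card T = j" "j \<le> r"
  shows "card {v \<in> rsubsets n r. T \<subseteq> v} = (n - j) choose (r - j)"
proof -
  have fT: "finite T" using assms(1) finite_subset by blast
  have img: "(\<lambda>v. v - T) ` {v \<in> rsubsets n r. T \<subseteq> v} = {S. S \<subseteq> {1..n} - T \<and> card S = r - j}"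
  proof
    show "(\<lambda>v. v - T) ` {v \<in> rsubsets n r. T \<subseteq> v} \<subseteq> {S. S \<subseteq> {1..n} - T \<and> card S = r - j}"
      using assms fT by (auto simp: rsubsets_def card_Diff_subset)
  next
    show "{S. S \<subseteq> {1..n} - T \<and> card S = r - j} \<subseteq> (\<lambda>v. v - T) ` {v \<in> rsubsets n r. T \<subseteq> v}"
    proof
      fix S assume S: "S \<in> {S. S \<subseteq> {1..n} - T \<and> card S = r - j}"
      have fS: "finite S" using S by (auto intro: finite_subset)
      have "card (S \<union> T) = r" using S assms fS fT by (subst card_Un_disjoint) auto
      then have "S \<union> T \<in> {v \<in> rsubsets n r. T \<subseteq> v}" using S assms by (auto simp: rsubsets_def)
      moreover have "S = (S \<union> T) - T" using S by auto
      ultimately show "S \<in> (\<lambda>v. v - T) ` {v \<in> rsubsets n r. T \<subseteq> v}" by blast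
    qed
  qed
  have inj: "inj_on (\<lambda>v. v - T) {v \<in> rsubsets n r. T \<subseteq> v}"
    by (rule inj_onI) (metis (no_types, lifting) Diff_partition mem_Collect_eq)
  have "card {v \<in> rsubsets n r. T \<subseteq> v} = card {S. S \<subseteq> {1..n} - T \<and> card S = r - j}"
    using card_image[OF inj] img by simp
  also have "\<dots> = card ({1..n} - T) choose (r - j)" by (rule n_subsets) simp
  also have "card ({1..n} - T) = n - j" using assms fT by (simp add: card_Diff_subset)
  finally show ?thesis .
qed

lemma count_sup:
  assumes "T \<subseteq> {1..n}" "card T = j" "2 \<le> j"
  shows "real (card {v \<in> rsubsets n r. T \<subseteq> v}) \<le> (real r / real n)^(j-2) * real ((n-2) choose (r-2))"
proof (cases "j \<le> r \<and> r \<le> n")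
  case True
  then show ?thesis using count_eq[OF assms(1,2)] binom_ratio[of j r n] assms by simp
next
  case False
  have fT: "finite T" using assms(1) finite_subset by blast
  have "{v \<in> rsubsets n r. T \<subseteq> v} = {}"
  proof (rule ccontr)
    assume "{v \<in> rsubsets n r. T \<subseteq> v} \<noteq> {}"
    then obtain v where v: "v \<subseteq> {1..n}" "card v = r" "T \<subseteq> v" by (auto simp: rsubsets_def)
    have "j \<le> r" using v assms card_mono[of v T] finite_subset[OF v(1)] by auto
    moreover have "r \<le> n" using v card_mono[of "{1..n}" v] by auto
    ultimately show False using False by simp
  qed
  then show ?thesis by (simp only: card.empty) simp
qed



lemma card_le_img: "Q \<subseteq> f ` S \<Longrightarrow> finite S \<Longrightarrow> card Q \<le> card S"
  using card_image_le card_mono finite_imageI le_trans by metis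

lemma card_UN_le_real:
  assumes "finite I" "\<And>i. i \<in> I \<Longrightarrow> real (card (F i)) \<le> c"
  shows "real (card (\<Union>i\<in>I. F i)) \<le> real (card I) * c"
proof -
  have "card (\<Union>i\<in>I. F i) \<le> (\<Sum>i\<in>I. card (F i))" by (rule card_UN_le[OF assms(1)])
  then have "real (card (\<Union>i\<in>I. F i)) \<le> real (\<Sum>i\<in>I. card (F i))" by (rule of_nat_mono)
  also have "\<dots> = (\<Sum>i\<in>I. real (card (F i)))" by (rule of_nat_sum)
  also have "\<dots> \<le> (\<Sum>i\<in>I. c)" by (rule sum_mono) (rule assms(2))
  finally show ?thesis by simp
qed

locale lay =
  fixes n r :: nat and A A0 :: "nat set set"
  assumes ind: "indep_Gnr1 n r A" and mx: "max_disjoint_subfamily A A0" and r5: "5 \<le> r"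
begin

lemma A_sub: "A \<subseteq> rsubsets n r" using ind by (simp add: indep_Gnr1_def)
lemma finA: "finite A" using A_sub rsub_fin finite_subset by blast
lemma A0A: "A0 \<subseteq> A" using mx by (simp add: max_disjoint_subfamily_def)
lemma finA0: "finite A0" using A0A finA finite_subset by blast
lemma memA: "v \<in> A \<Longrightarrow> v \<subseteq> {1..n} \<and> card v = r \<and> finite v"
  using A_sub by (auto simp: rsubsets_def intro: finite_subset)
lemma nosing: "v \<in> A \<Longrightarrow> w \<in> A \<Longrightarrow> v \<noteq> w \<Longrightarrow> card (v \<inter> w) \<noteq> 1"
  using ind by (auto simp: indep_Gnr1_def adj_Gnr1_def)
lemma disj: "u \<in> A0 \<Longrightarrow> u' \<in> A0 \<Longrightarrow> u \<noteq> u' \<Longrightarrow> u \<inter> u' = {}"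
  using mx by (auto simp: max_disjoint_subfamily_def pairwise_def disjnt_def)
lemma memA0: "u \<in> A0 \<Longrightarrow> u \<subseteq> {1..n} \<and> card u = r \<and> finite u"
  using A0A memA by blast

definition "U = \<Union>A0"
definition "k = card A0"

lemma U_sub: "U \<subseteq> {1..n}" using memA0 by (auto simp: U_def)
lemma finU: "finite U" using U_sub finite_subset by blast

lemma kr_le: "k * r \<le> n"
proof -
  have "card U = sum card A0" unfolding U_def
    using mx memA0 by (intro card_Union_disjoint) (auto simp: max_disjoint_subfamily_def)
  also have "\<dots> = k * r" using memA0 by (simp add: k_def)
  finally have "card U = k * r" .
  moreover have "card U \<le> n" using card_mono[OF _ U_sub] by simp
  ultimately show ?thesis by simp
qed

definition "P2 = {p. \<exists>u\<in>A0. p \<subseteq> u \<and> card p = 2}"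
definition "P3 = {p. \<exists>u\<in>A0. p \<subseteq> u \<and> card p = 3}"

lemma card_Pj:
  assumes "j \<le> 3"
  shows "card {p. \<exists>u\<in>A0. p \<subseteq> u \<and> card p = j} \<le> k * r^j"
proof -
  have eq: "{p. \<exists>u\<in>A0. p \<subseteq> u \<and> card p = j} = (\<Union>u\<in>A0. {p. p \<subseteq> u \<and> card p = j})" by auto
  have "card (\<Union>u\<in>A0. {p. p \<subseteq> u \<and> card p = j}) \<le> (\<Sum>u\<in>A0. card {p. p \<subseteq> u \<and> card p = j})"
    by (rule card_UN_le[OF finA0])
  also have "\<dots> \<le> (\<Sum>u\<in>A0. r^j)"
  proof (rule sum_mono)
    fix u assume "u \<in> A0"
    then have "card {p. p \<subseteq> u \<and> card p = j} = r choose j" using memA0 n_subsets by metis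
    also have "\<dots> \<le> r^j" by (rule binomial_le_pow) (use r5 assms in simp)
    finally show "card {p. p \<subseteq> u \<and> card p = j} \<le> r^j" .
  qed
  finally show ?thesis using eq by (simp add: k_def)
qed

lemma card_P2: "card P2 \<le> k * r^2" unfolding P2_def by (rule card_Pj) simp
lemma card_P3: "card P3 \<le> k * r^3" unfolding P3_def by (rule card_Pj) simp

lemma finP2: "finite P2"
  unfolding P2_def by (rule finite_subset[of _ "Pow U"]) (auto simp: U_def finU[unfolded U_def])
lemma finP3: "finite P3"
  unfolding P3_def by (rule finite_subset[of _ "Pow U"]) (auto simp: U_def finU[unfolded U_def])
lemma P2_sub: "p \<in> P2 \<Longrightarrow> p \<subseteq> U" by (auto simp: P2_def U_def)
lemma P3_sub: "p \<in> P3 \<Longrightarrow> p \<subseteq> U" by (auto simp: P3_def U_def)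

definition "T6 = {p1 \<union> p2 \<union> p3 | p1 p2 p3. p1 \<in> P2 \<and> p2 \<in> P2 \<and> p3 \<in> P2 \<and> card (p1 \<union> p2 \<union> p3) = 6}"
definition "T5 = {t \<union> p | t p. t \<in> P3 \<and> p \<in> P2 \<and> card (t \<union> p) = 5}"
definition "Q4 = {p1 \<union> p2 | p1 p2. p1 \<in> P2 \<and> p2 \<in> P2 \<and> card (p1 \<union> p2) = 4}"

lemma card_T6: "card T6 \<le> card P2 ^ 3"
proof -
  have "T6 \<subseteq> (\<lambda>(a,b,c). a \<union> b \<union> c) ` (P2 \<times> P2 \<times> P2)" unfolding T6_def by auto
  then have "card T6 \<le> card (P2 \<times> P2 \<times> P2)"
    by (rule card_le_img) (use finP2 in simp)
  then show ?thesis by (simp add: card_cartesian_product power3_eq_cube)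
qed

lemma card_T5: "card T5 \<le> card P3 * card P2"
proof -
  have "T5 \<subseteq> (\<lambda>(a,b). a \<union> b) ` (P3 \<times> P2)" unfolding T5_def by auto
  then have "card T5 \<le> card (P3 \<times> P2)"
    by (rule card_le_img) (use finP2 finP3 in simp)
  then show ?thesis by (simp add: card_cartesian_product)
qed

lemma card_Q4: "card Q4 \<le> card P2 ^ 2"
proof -
  have "Q4 \<subseteq> (\<lambda>(a,b). a \<union> b) ` (P2 \<times> P2)" unfolding Q4_def by auto
  then have "card Q4 \<le> card (P2 \<times> P2)"
    by (rule card_le_img) (use finP2 in simp)
  then show ?thesis by (simp add: card_cartesian_product power2_eq_square)
qed

lemma finQ4: "finite Q4"
proof -
  have "Q4 \<subseteq> (\<lambda>(a,b). a \<union> b) ` (P2 \<times> P2)" unfolding Q4_def by auto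
  then show ?thesis by (rule finite_subset) (use finP2 in simp)
qed

lemma Q4_sub: "Q \<in> Q4 \<Longrightarrow> Q \<subseteq> U \<and> card Q = 4"
  unfolding Q4_def using P2_sub by blast

definition "N = (n - 2) choose (r - 2)"
definition "\<rho> = real r / real n"

lemma union_bound:
  assumes "finite I" "\<And>T. T \<in> I \<Longrightarrow> T \<subseteq> {1..n} \<and> card T = j" "2 \<le> j"
  shows "real (card {v \<in> rsubsets n r. \<exists>T\<in>I. T \<subseteq> v}) \<le> real (card I) * (\<rho>^(j-2) * real N)"
proof -
  have "{v \<in> rsubsets n r. \<exists>T\<in>I. T \<subseteq> v} = (\<Union>T\<in>I. {v \<in> rsubsets n r. T \<subseteq> v})" by auto
  moreover have "real (card (\<Union>T\<in>I. {v \<in> rsubsets n r. T \<subseteq> v})) \<le> real (card I) * (\<rho>^(j-2) * real N)"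
    by (rule card_UN_le_real[OF assms(1)]) (use count_sup assms in \<open>auto simp: \<rho>_def N_def\<close>)
  ultimately show ?thesis by simp
qed

definition "B6 = {v \<in> rsubsets n r. \<exists>T\<in>T6. T \<subseteq> v}"
definition "B5 = {v \<in> rsubsets n r. \<exists>T\<in>T5. T \<subseteq> v}"

lemma finT6: "finite T6"
proof -
  have "T6 \<subseteq> (\<lambda>(a,b,c). a \<union> b \<union> c) ` (P2 \<times> P2 \<times> P2)" unfolding T6_def by auto
  then show ?thesis by (rule finite_subset) (use finP2 in simp)
qed
lemma finT5: "finite T5"
proof -
  have "T5 \<subseteq> (\<lambda>(a,b). a \<union> b) ` (P3 \<times> P2)" unfolding T5_def by auto
  then show ?thesis by (rule finite_subset) (use finP2 finP3 in simp)
qed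

lemma B6_bound: "real (card B6) \<le> real (card P2 ^ 3) * (\<rho>^4 * real N)"
proof -
  have "real (card B6) \<le> real (card T6) * (\<rho>^(6-2) * real N)"
    unfolding B6_def by (rule union_bound[OF finT6]) (use U_sub P2_sub in \<open>auto simp: T6_def\<close>)
  also have "\<dots> = real (card T6) * (\<rho>^4 * real N)" by simp
  also have "\<dots> \<le> real (card P2 ^ 3) * (\<rho>^4 * real N)"
    by (rule mult_right_mono) (use card_T6 in \<open>simp_all add: \<rho>_def\<close>)
  finally show ?thesis .
qed

lemma B5_bound: "real (card B5) \<le> real (card P3 * card P2) * (\<rho>^3 * real N)"
proof -
  have "real (card B5) \<le> real (card T5) * (\<rho>^(5-2) * real N)"
    unfolding B5_def by (rule union_bound[OF finT5]) (use U_sub P2_sub P3_sub in \<open>auto simp: T5_def\<close>)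
  also have "\<dots> = real (card T5) * (\<rho>^3 * real N)" by simp
  also have "\<dots> \<le> real (card P3 * card P2) * (\<rho>^3 * real N)"
    by (rule mult_right_mono) (use card_T5 in \<open>simp_all add: \<rho>_def flip: of_nat_mult\<close>)
  finally show ?thesis .
qed

end


context lay begin

definition "V = {v \<in> A. v \<inter> U \<in> Q4}"
definition "Rs = (\<lambda>v. v - U) ` V"
definition "Anc R = {Q \<in> Q4. Q \<union> R \<in> A}"
definition "D = 8 * r * card P2"

lemma finV: "finite V" unfolding V_def using finA by simp
lemma finRs: "finite Rs" unfolding Rs_def using finV by simp

lemma Rs_props:
  assumes "R \<in> Rs"
  shows "R \<inter> U = {} \<and> R \<subseteq> {1..n} \<and> card R = r - 4 \<and> finite R"
proof -
  obtain v where v: "v \<in> V" "R = v - U" using assms by (auto simp: Rs_def)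
  have vA: "v \<subseteq> {1..n}" "card v = r" "finite v" using v memA by (auto simp: V_def)
  have "card (v \<inter> U) = 4" using v Q4_sub by (auto simp: V_def)
  then have "card R = r - 4" using v vA by (simp add: card_Diff_subset_Int)
  then show ?thesis using v vA by auto
qed

lemma V_le: "card V \<le> (\<Sum>R\<in>Rs. card (Anc R))"
proof -
  have "V \<subseteq> (\<Union>R\<in>Rs. (\<lambda>Q. Q \<union> R) ` Anc R)"
  proof
    fix v assume v: "v \<in> V"
    have "v = (v \<inter> U) \<union> (v - U)" by auto
    moreover have "v \<inter> U \<union> (v - U) = v" by blast
    then have "v \<inter> U \<in> Anc (v - U)" using v by (auto simp: V_def Anc_def)
    moreover have "v - U \<in> Rs" using v by (auto simp: Rs_def)
    ultimately show "v \<in> (\<Union>R\<in>Rs. (\<lambda>Q. Q \<union> R) ` Anc R)" by blast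
  qed
  then have "card V \<le> card (\<Union>R\<in>Rs. (\<lambda>Q. Q \<union> R) ` Anc R)"
    by (rule card_mono[rotated]) (use finRs finQ4 in \<open>auto simp: Anc_def\<close>)
  also have "\<dots> \<le> (\<Sum>R\<in>Rs. card ((\<lambda>Q. Q \<union> R) ` Anc R))" by (rule card_UN_le[OF finRs])
  also have "\<dots> \<le> (\<Sum>R\<in>Rs. card (Anc R))" by (rule sum_mono) (rule card_image_le, simp add: Anc_def finQ4)
  finally show ?thesis .
qed

lemma P2_through:
  assumes "y \<in> U"
  shows "card {p \<in> P2. y \<in> p} \<le> r"
proof -
  obtain u0 where u0: "u0 \<in> A0" "y \<in> u0" using assms by (auto simp: U_def)
  have "{p \<in> P2. y \<in> p} \<subseteq> (\<lambda>z. {y, z}) ` u0"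
  proof
    fix p assume p: "p \<in> {p \<in> P2. y \<in> p}"
    then obtain u where u: "u \<in> A0" "p \<subseteq> u" "card p = 2" "y \<in> p" by (auto simp: P2_def)
    have "u = u0" using disj[OF u(1) u0(1)] u u0 by blast
    obtain a b where ab: "p = {a, b}" "a \<noteq> b" using u(3) by (meson card_2_iff)
    show "p \<in> (\<lambda>z. {y, z}) ` u0"
    proof (cases "y = a")
      case True then show ?thesis using ab u \<open>u = u0\<close> by auto
    next
      case False then have "y = b" using ab u by auto
      then show ?thesis using ab u \<open>u = u0\<close> by (auto simp: insert_commute)
    qed
  qed
  then have "card {p \<in> P2. y \<in> p} \<le> card u0"
    by (rule card_le_img) (use memA0 u0 in auto)
  then show ?thesis using memA0 u0 by simp
qed

lemma meet_bound:
  assumes "Q' \<in> Q4"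
  shows "card {Q \<in> Q4. Q \<inter> Q' \<noteq> {}} \<le> D"
proof -
  define Pm where "Pm = {p \<in> P2. p \<inter> Q' \<noteq> {}}"
  have Q': "Q' \<subseteq> U" "card Q' = 4" using Q4_sub assms by auto
  have fQ': "finite Q'" using Q' finU finite_subset by blast
  have "Pm = (\<Union>y\<in>Q'. {p \<in> P2. y \<in> p})" unfolding Pm_def by auto
  then have "card Pm \<le> (\<Sum>y\<in>Q'. card {p \<in> P2. y \<in> p})" using card_UN_le[OF fQ'] by simp
  also have "\<dots> \<le> (\<Sum>y\<in>Q'. r)" by (rule sum_mono) (use P2_through Q' in blast)
  finally have cPm: "card Pm \<le> 4 * r" using Q' by simp
  have finPm: "finite Pm" unfolding Pm_def using finP2 by simp
  have "{Q \<in> Q4. Q \<inter> Q' \<noteq> {}} \<subseteq> (\<lambda>(a,b). a \<union> b) ` (Pm \<times> P2 \<union> P2 \<times> Pm)"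
  proof
    fix Q assume "Q \<in> {Q \<in> Q4. Q \<inter> Q' \<noteq> {}}"
    then obtain p1 p2 where "Q = p1 \<union> p2" "p1 \<in> P2" "p2 \<in> P2" "Q \<inter> Q' \<noteq> {}" by (auto simp: Q4_def)
    then show "Q \<in> (\<lambda>(a,b). a \<union> b) ` (Pm \<times> P2 \<union> P2 \<times> Pm)"
      unfolding Pm_def by (auto simp: image_iff)
  qed
  then have "card {Q \<in> Q4. Q \<inter> Q' \<noteq> {}} \<le> card (Pm \<times> P2 \<union> P2 \<times> Pm)"
    by (rule card_le_img) (use finPm finP2 in simp)
  also have "\<dots> \<le> card (Pm \<times> P2) + card (P2 \<times> Pm)" by (rule card_Un_le)
  also have "\<dots> = 2 * card Pm * card P2" by (simp add: card_cartesian_product)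
  also have "\<dots> \<le> 2 * (4 * r) * card P2" using cPm by simp
  finally show ?thesis by (simp add: D_def)
qed

lemma anc_parts:
  assumes "Q \<in> Anc R" "R \<in> Rs"
  shows "Q \<subseteq> U" "card Q = 4" "Q \<union> R \<in> A" "(Q \<union> R) - U = R" "Q \<in> Q4"
proof -
  have q: "Q \<in> Q4" "Q \<union> R \<in> A" using assms(1) by (auto simp: Anc_def)
  show "Q \<subseteq> U" "card Q = 4" using Q4_sub[OF q(1)] by auto
  show "Q \<union> R \<in> A" "Q \<in> Q4" using q by auto
  show "(Q \<union> R) - U = R" using Q4_sub[OF q(1)] Rs_props[OF assms(2)] by blast
qed

lemma block:
  assumes "R \<in> Rs" "R1 \<in> Rs" "R \<noteq> R1" "Q' \<in> Anc R1" "card (R \<inter> R1) = 1"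
  shows "Anc R \<subseteq> {Q \<in> Q4. Q \<inter> Q' \<noteq> {}}"
proof
  fix Q assume Q: "Q \<in> Anc R"
  note a = anc_parts[OF Q assms(1)] and b = anc_parts[OF assms(4) assms(2)]
  have ne: "Q \<union> R \<noteq> Q' \<union> R1" using a(4) b(4) assms(3) by metis
  have "Q \<inter> Q' \<noteq> {}"
  proof
    assume e: "Q \<inter> Q' = {}"
    have "(Q \<union> R) \<inter> (Q' \<union> R1) = R \<inter> R1"
      using e a(1) b(1) Rs_props[OF assms(1)] Rs_props[OF assms(2)] by blast
    then show False using nosing[OF a(3) b(3) ne] assms(5) by simp
  qed
  then show "Q \<in> {Q \<in> Q4. Q \<inter> Q' \<noteq> {}}" using a(5) by simp
qed

lemma block5:
  assumes "R \<in> Rs" "card R = 1" "Q1 \<in> Anc R"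
  shows "Anc R \<subseteq> {Q \<in> Q4. Q \<inter> Q1 \<noteq> {}}"
proof
  fix Q assume Q: "Q \<in> Anc R"
  note a = anc_parts[OF Q assms(1)] and b = anc_parts[OF assms(3) assms(1)]
  have "Q \<inter> Q1 \<noteq> {}"
  proof (cases "Q = Q1")
    case True then show ?thesis using a(2) by auto
  next
    case False
    have ne: "Q \<union> R \<noteq> Q1 \<union> R" using a(1) b(1) Rs_props[OF assms(1)] False by blast
    show ?thesis
    proof
      assume e: "Q \<inter> Q1 = {}"
      have "(Q \<union> R) \<inter> (Q1 \<union> R) = R" using e a(1) b(1) Rs_props[OF assms(1)] by blast
      then show False using nosing[OF a(3) b(3) ne] assms(2) by simp
    qed
  qed
  then show "Q \<in> {Q \<in> Q4. Q \<inter> Q1 \<noteq> {}}" using a(5) by simp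
qed

end


context lay begin

lemma rho_nn: "0 \<le> \<rho>" by (simp add: \<rho>_def)

lemma inj_count:
  assumes "Q0 \<in> Q4" "S \<subseteq> {1..n}" "S \<inter> U = {}" "F \<subseteq> Rs" "\<forall>R\<in>F. S \<subseteq> R"
  shows "real (card F) \<le> \<rho>^(card S + 2) * real N"
proof -
  have fS: "finite S" using assms(2) finite_subset by blast
  have Q0: "Q0 \<subseteq> U" "card Q0 = 4" using Q4_sub assms(1) by auto
  have fQ0: "finite Q0" using Q0 finU finite_subset by blast
  have inj: "inj_on (\<lambda>R. R \<union> Q0) F"
  proof (rule inj_onI)
    fix R1 R2 assume R: "R1 \<in> F" "R2 \<in> F" "R1 \<union> Q0 = R2 \<union> Q0"
    have "R1 = (R1 \<union> Q0) - U" using Rs_props R assms(4) Q0 by blast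
    also have "\<dots> = (R2 \<union> Q0) - U" using R by simp
    also have "\<dots> = R2" using Rs_props R assms(4) Q0 by blast
    finally show "R1 = R2" .
  qed
  have img: "(\<lambda>R. R \<union> Q0) ` F \<subseteq> {v \<in> rsubsets n r. Q0 \<union> S \<subseteq> v}"
  proof
    fix v assume "v \<in> (\<lambda>R. R \<union> Q0) ` F"
    then obtain R where R: "R \<in> F" "v = R \<union> Q0" by auto
    have Rp: "R \<inter> U = {}" "R \<subseteq> {1..n}" "card R = r - 4" "finite R" using Rs_props R assms(4) by auto
    have "card (R \<union> Q0) = card R + card Q0" by (rule card_Un_disjoint) (use Rp Q0 fQ0 in auto)
    then have "card v = r" using R(2) Rp Q0 r5 by simp
    moreover have "v \<subseteq> {1..n}" using R(2) Rp Q0 U_sub by auto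
    moreover have "Q0 \<union> S \<subseteq> v" using R assms(5) by auto
    ultimately show "v \<in> {v \<in> rsubsets n r. Q0 \<union> S \<subseteq> v}" by (simp add: rsubsets_def)
  qed
  have "card F \<le> card {v \<in> rsubsets n r. Q0 \<union> S \<subseteq> v}"
    by (rule card_inj_on_le[OF inj img]) (simp add: rsub_fin)
  moreover have cQS: "card (Q0 \<union> S) = 4 + card S"
    using Q0 assms(3) fS fQ0 by (subst card_Un_disjoint) auto
  moreover have "real (card {v \<in> rsubsets n r. Q0 \<union> S \<subseteq> v}) \<le> \<rho>^((4 + card S) - 2) * real N"
    unfolding \<rho>_def N_def by (rule count_sup) (use Q0 U_sub assms(2) cQS in auto)
  ultimately show ?thesis by (simp add: add.commute)
qed

lemma Q4_ne: "Rs \<noteq> {} \<Longrightarrow> \<exists>Q0. Q0 \<in> Q4"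
  by (auto simp: Rs_def V_def)

lemma Rs_bound: "real (card Rs) \<le> \<rho>^2 * real N"
proof (cases "Rs = {}")
  case True then show ?thesis using rho_nn by simp
next
  case False
  then obtain Q0 where "Q0 \<in> Q4" using Q4_ne by blast
  from inj_count[OF this, of "{}" Rs] show ?thesis by (simp add: power2_eq_square)
qed

definition "H = {R \<in> Rs. D < card (Anc R)}"

lemma H5: "r = 5 \<Longrightarrow> H = {}"
proof (rule ccontr)
  assume r: "r = 5" and "H \<noteq> {}"
  then obtain R where R: "R \<in> Rs" "D < card (Anc R)" unfolding H_def by blast
  then obtain Q1 where Q1: "Q1 \<in> Anc R" by fastforce
  have "card R = 1" using Rs_props[OF R(1)] r by simp
  then have "Anc R \<subseteq> {Q \<in> Q4. Q \<inter> Q1 \<noteq> {}}" using block5 R(1) Q1 by blast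
  then have "card (Anc R) \<le> card {Q \<in> Q4. Q \<inter> Q1 \<noteq> {}}" by (rule card_mono[rotated]) (simp add: finQ4)
  also have "\<dots> \<le> D" by (rule meet_bound) (use anc_parts[OF Q1 R(1)] in simp)
  finally show False using R(2) by simp
qed

lemma Hx_bound:
  assumes "6 \<le> r"
  shows "real (card {R \<in> H. x \<in> R}) \<le> real r * (\<rho>^4 * real N)"
proof (cases "{R \<in> H. x \<in> R} = {}")
  case True then show ?thesis using rho_nn by (simp only: True card.empty of_nat_0) simp
next
  case False
  then obtain R1 where R1: "R1 \<in> H" "x \<in> R1" by auto
  have R1s: "R1 \<in> Rs" using R1 by (simp add: H_def)
  note R1p = Rs_props[OF R1s]
  obtain Q0 where Q0: "Q0 \<in> Q4" using Q4_ne R1s by blast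
  have cover: "{R \<in> H. x \<in> R} \<subseteq> (\<Union>y\<in>R1 - {x}. {R \<in> Rs. {x, y} \<subseteq> R})"
  proof
    fix R assume R: "R \<in> {R \<in> H. x \<in> R}"
    have Rs: "R \<in> Rs" "D < card (Anc R)" "x \<in> R" using R by (auto simp: H_def)
    have "\<exists>y\<in>R1 - {x}. y \<in> R"
    proof (cases "R = R1")
      case True
      have "card (R1 - {x}) \<noteq> 0" using R1p R1 assms by simp
      then obtain y where "y \<in> R1 - {x}" by (metis card.empty ex_in_conv)
      then show ?thesis using True by blast
    next
      case False
      show ?thesis
      proof (rule ccontr)
        assume "\<not> (\<exists>y\<in>R1 - {x}. y \<in> R)"
        then have "R \<inter> R1 = {x}" using Rs R1 by blast
        then have c1: "card (R \<inter> R1) = 1" by simp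
        have "Anc R1 \<noteq> {}" using R1 by (auto simp: H_def)
        then obtain Q' where Q': "Q' \<in> Anc R1" by blast
        have "Anc R \<subseteq> {Q \<in> Q4. Q \<inter> Q' \<noteq> {}}" by (rule block[OF Rs(1) R1s False Q' c1])
        then have "card (Anc R) \<le> card {Q \<in> Q4. Q \<inter> Q' \<noteq> {}}" by (rule card_mono[rotated]) (simp add: finQ4)
        also have "\<dots> \<le> D" by (rule meet_bound) (use anc_parts[OF Q' R1s] in simp)
        finally show False using Rs(2) by simp
      qed
    qed
    then show "R \<in> (\<Union>y\<in>R1 - {x}. {R \<in> Rs. {x, y} \<subseteq> R})" using Rs by blast
  qed
  have fin1: "finite (R1 - {x})" using R1p by simp
  have "real (card (\<Union>y\<in>R1 - {x}. {R \<in> Rs. {x, y} \<subseteq> R})) \<le> real (card (R1 - {x})) * (\<rho>^4 * real N)"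
  proof (rule card_UN_le_real[OF fin1])
    fix y assume y: "y \<in> R1 - {x}"
    have "real (card {R \<in> Rs. {x, y} \<subseteq> R}) \<le> \<rho>^(card {x,y} + 2) * real N"
      by (rule inj_count[OF Q0]) (use y R1 R1p in auto)
    moreover have "card {x,y} + 2 = 4" using y by simp
    ultimately show "real (card {R \<in> Rs. {x, y} \<subseteq> R}) \<le> \<rho>^4 * real N" by metis
  qed
  moreover have "card {R \<in> H. x \<in> R} \<le> card (\<Union>y\<in>R1 - {x}. {R \<in> Rs. {x, y} \<subseteq> R})"
    by (rule card_mono[OF _ cover]) (use fin1 finRs in simp)
  moreover have "card (R1 - {x}) \<le> r" using R1p by (simp add: card_Diff_singleton_if)
  moreover have "0 \<le> \<rho>^4 * real N" using rho_nn by simp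
  ultimately show ?thesis
    by (smt (verit, ccfv_SIG) mult_right_mono of_nat_le_iff)
qed

lemma H_bound: "real (card H) \<le> real n * (real r * (\<rho>^4 * real N))"
proof (cases "r = 5")
  case True then show ?thesis using H5 rho_nn by simp
next
  case False
  then have r6: "6 \<le> r" using r5 by simp
  have "H \<subseteq> (\<Union>x\<in>{1..n}. {R \<in> H. x \<in> R})"
  proof
    fix R assume R: "R \<in> H"
    then have "R \<in> Rs" by (simp add: H_def)
    note p = Rs_props[OF this]
    then have "R \<noteq> {}" using r6 by auto
    then obtain x where "x \<in> R" by blast
    then show "R \<in> (\<Union>x\<in>{1..n}. {R \<in> H. x \<in> R})" using p R by blast
  qed
  then have "card H \<le> card (\<Union>x\<in>{1..n}. {R \<in> H. x \<in> R})"
    by (rule card_mono[rotated]) (use finRs in \<open>simp add: H_def\<close>)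
  also have "real \<dots> \<le> real (card {1..n}) * (real r * (\<rho>^4 * real N))"
    by (rule card_UN_le_real) (use Hx_bound r6 in auto)
  finally show ?thesis by simp
qed

lemma sum_split: "(\<Sum>R\<in>Rs. card (Anc R)) \<le> card Rs * D + card H * card Q4"
proof -
  have Hs: "H \<subseteq> Rs" by (auto simp: H_def)
  have "(\<Sum>R\<in>Rs. card (Anc R)) = (\<Sum>R\<in>Rs - H. card (Anc R)) + (\<Sum>R\<in>H. card (Anc R))"
    by (rule sum.subset_diff[OF Hs finRs])
  also have "(\<Sum>R\<in>Rs - H. card (Anc R)) \<le> (\<Sum>R\<in>Rs - H. D)" by (rule sum_mono) (auto simp: H_def)
  also have "\<dots> \<le> card Rs * D" using finRs by (simp add: card_mono)
  also have "(\<Sum>R\<in>H. card (Anc R)) \<le> (\<Sum>R\<in>H. card Q4)"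
    by (rule sum_mono) (rule card_mono, simp_all add: finQ4 Anc_def)
  also have "\<dots> = card H * card Q4" by simp
  finally show ?thesis by simp
qed

lemma V_bound: "real (card V) \<le> \<rho>^2 * real N * real D + real n * (real r * (\<rho>^4 * real N)) * real (card Q4)"
proof -
  have "card V \<le> card Rs * D + card H * card Q4" using V_le sum_split by linarith
  then have "real (card V) \<le> real (card Rs) * real D + real (card H) * real (card Q4)"
    by (metis of_nat_add of_nat_le_iff of_nat_mult)
  also have "\<dots> \<le> \<rho>^2 * real N * real D + real n * (real r * (\<rho>^4 * real N)) * real (card Q4)"
    by (intro add_mono mult_right_mono Rs_bound H_bound) auto
  finally show ?thesis .
qed

end


context lay begin

definition "Bset = {v \<in> A - A0. 2 \<le> card {u \<in> A0. u \<inter> v \<noteq> {}}}"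

lemma layers: "(\<Sum>i\<in>{2..card A0}. card (A_layer A A0 i)) \<le> card Bset"
proof -
  have "(\<Sum>i\<in>{2..card A0}. card (A_layer A A0 i)) = card (\<Union>i\<in>{2..card A0}. A_layer A A0 i)"
    by (rule card_UN_disjoint[symmetric]) (use finA in \<open>auto simp: A_layer_def\<close>)
  also have "\<dots> \<le> card Bset"
    by (rule card_mono) (use finA in \<open>auto simp: Bset_def A_layer_def\<close>)
  finally show ?thesis .
qed

lemma meet2:
  assumes "v \<in> A - A0" "u \<in> A0" "u \<inter> v \<noteq> {}"
  shows "2 \<le> card (v \<inter> u)"
proof -
  have "v \<noteq> u" using assms by auto
  have "u \<in> A" using A0A assms by auto
  have "card (v \<inter> u) \<noteq> 1" using nosing[of v u] assms \<open>v \<noteq> u\<close> \<open>u \<in> A\<close> by auto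
  moreover have "finite (v \<inter> u)" using memA0[OF assms(2)] by simp
  then have "card (v \<inter> u) \<noteq> 0" using assms(3) by (simp add: Int_commute)
  ultimately show ?thesis by linarith
qed

lemma pick:
  assumes "j \<le> card (v \<inter> u)" "u \<in> A0"
  obtains p where "p \<subseteq> v \<inter> u" "card p = j" "p \<subseteq> u"
proof -
  obtain T where T: "T \<subseteq> v \<inter> u" "card T = j" by (rule obtain_subset_with_card_n[OF assms(1)])
  then show ?thesis by (intro that) auto
qed

lemma cover: "Bset \<subseteq> B6 \<union> B5 \<union> V"
proof
  fix v assume vB: "v \<in> Bset"
  define M where "M = {u \<in> A0. u \<inter> v \<noteq> {}}"
  have v: "v \<in> A - A0" "2 \<le> card M" using vB by (auto simp: Bset_def M_def)
  have vr: "v \<in> rsubsets n r" using v A_sub by auto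
  have finM: "finite M" using finA0 by (simp add: M_def)
  have M2: "\<And>u. u \<in> M \<Longrightarrow> 2 \<le> card (v \<inter> u)" using meet2 v(1) by (auto simp: M_def)
  have MA0: "M \<subseteq> A0" by (auto simp: M_def)
  show "v \<in> B6 \<union> B5 \<union> V"
  proof (cases "3 \<le> card M")
    case True
    then obtain M3 where M3: "M3 \<subseteq> M" "card M3 = 3" by (meson obtain_subset_with_card_n)
    have "\<exists>x y z. M3 = {x,y,z} \<and> x \<noteq> y \<and> y \<noteq> z \<and> x \<noteq> z" using M3(2) by (simp add: card_3_iff)
    then obtain u1 u2 u3 where u: "M3 = {u1,u2,u3}" "u1 \<noteq> u2" "u2 \<noteq> u3" "u1 \<noteq> u3"
      by blast
    have uM: "u1 \<in> M" "u2 \<in> M" "u3 \<in> M" using u M3 by auto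
    obtain p1 where p1: "p1 \<subseteq> v \<inter> u1" "card p1 = 2" "p1 \<subseteq> u1"
      by (rule pick[OF M2[OF uM(1)]]) (use uM MA0 in auto)
    obtain p2 where p2: "p2 \<subseteq> v \<inter> u2" "card p2 = 2" "p2 \<subseteq> u2"
      by (rule pick[OF M2[OF uM(2)]]) (use uM MA0 in auto)
    obtain p3 where p3: "p3 \<subseteq> v \<inter> u3" "card p3 = 2" "p3 \<subseteq> u3"
      by (rule pick[OF M2[OF uM(3)]]) (use uM MA0 in auto)
    have d12: "u1 \<inter> u2 = {}" "u2 \<inter> u3 = {}" "u1 \<inter> u3 = {}" using disj uM MA0 u by auto
    have f: "finite p1" "finite p2" "finite p3" using p1 p2 p3 by (auto intro: card_ge_0_finite)
    have "card (p1 \<union> p2) = 4" using f p1 p2 d12 by (subst card_Un_disjoint) auto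
    moreover have "(p1 \<union> p2) \<inter> p3 = {}" using p1 p2 p3 d12 by blast
    ultimately have "card (p1 \<union> p2 \<union> p3) = 6" using f p3 by (subst card_Un_disjoint) auto
    moreover have "p1 \<in> P2" "p2 \<in> P2" "p3 \<in> P2" using p1 p2 p3 uM MA0 by (auto simp: P2_def)
    ultimately have "p1 \<union> p2 \<union> p3 \<in> T6" unfolding T6_def by blast
    moreover have "p1 \<union> p2 \<union> p3 \<subseteq> v" using p1 p2 p3 by blast
    ultimately show ?thesis using vr unfolding B6_def by blast
  next
    case False
    then have "card M = 2" using v by simp
    then have "\<exists>x y. M = {x,y} \<and> x \<noteq> y" by (simp add: card_2_iff)
    then obtain u1 u2 where u: "M = {u1,u2}" "u1 \<noteq> u2" by blast
    have uM: "u1 \<in> M" "u2 \<in> M" using u by auto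
    have d12: "u1 \<inter> u2 = {}" using disj uM MA0 u by auto
    have five: "v \<in> B5" if a: "a \<in> M" "b \<in> M" "a \<inter> b = {}" "3 \<le> card (v \<inter> a)" for a b
    proof -
      obtain t where t: "t \<subseteq> v \<inter> a" "card t = 3" "t \<subseteq> a" by (rule pick[OF a(4)]) (use a MA0 in auto)
      obtain p where p: "p \<subseteq> v \<inter> b" "card p = 2" "p \<subseteq> b" by (rule pick[OF M2[OF a(2)]]) (use a MA0 in auto)
      have f: "finite t" "finite p" using t p by (auto intro: card_ge_0_finite)
      have "card (t \<union> p) = 5" using f t p a by (subst card_Un_disjoint) auto
      moreover have "t \<in> P3" "p \<in> P2" using t p a MA0 by (auto simp: P3_def P2_def)
      ultimately have "t \<union> p \<in> T5" unfolding T5_def by blast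
      moreover have "t \<union> p \<subseteq> v" using t p by blast
      ultimately show ?thesis using vr unfolding B5_def by blast
    qed
    show ?thesis
    proof (cases "3 \<le> card (v \<inter> u1) \<or> 3 \<le> card (v \<inter> u2)")
      case True
      then show ?thesis using five[of u1 u2] five[of u2 u1] uM d12 by (auto simp: Int_commute)
    next
      case False
      then have c: "card (v \<inter> u1) = 2" "card (v \<inter> u2) = 2" using M2 uM by force+
      have f: "finite (v \<inter> u1)" "finite (v \<inter> u2)" using c by (auto intro: card_ge_0_finite)
      have vU: "v \<inter> U = (v \<inter> u1) \<union> (v \<inter> u2)"
      proof
        show "v \<inter> U \<subseteq> (v \<inter> u1) \<union> (v \<inter> u2)"
        proof
          fix x assume x: "x \<in> v \<inter> U"
          then obtain u where "u \<in> A0" "x \<in> u" by (auto simp: U_def)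
          then have "u \<in> M" using x by (auto simp: M_def)
          then show "x \<in> (v \<inter> u1) \<union> (v \<inter> u2)" using u x \<open>x \<in> u\<close> by auto
        qed
        show "(v \<inter> u1) \<union> (v \<inter> u2) \<subseteq> v \<inter> U" using uM MA0 by (auto simp: U_def)
      qed
      have "card ((v \<inter> u1) \<union> (v \<inter> u2)) = 4" using f c d12 by (subst card_Un_disjoint) auto
      moreover have "v \<inter> u1 \<in> P2" "v \<inter> u2 \<in> P2" using c uM MA0 by (auto simp: P2_def)
      ultimately have "v \<inter> U \<in> Q4" unfolding Q4_def vU by blast
      then show ?thesis using v by (auto simp: V_def)
    qed
  qed
qed

lemma Bset_bound_raw:
  "real (card Bset) \<le> real (card P2 ^ 3) * (\<rho>^4 * real N) + real (card P3 * card P2) * (\<rho>^3 * real N)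
     + (\<rho>^2 * real N * real D + real n * (real r * (\<rho>^4 * real N)) * real (card Q4))"
proof -
  have fins: "finite B6" "finite B5" "finite V" using finV rsub_fin by (auto simp: B6_def B5_def)
  have "card Bset \<le> card (B6 \<union> B5 \<union> V)" by (rule card_mono[OF _ cover]) (use fins in simp)
  also have "\<dots> \<le> card B6 + card B5 + card V" by (meson card_Un_le add_le_mono order_trans le_refl)
  finally have "real (card Bset) \<le> real (card B6) + real (card B5) + real (card V)" by linarith
  then show ?thesis using B6_bound B5_bound V_bound by linarith
qed

end

lemma final_arith:
  fixes n r P P3 Q N :: real
  assumes "n > 0" "r \<ge> 1" "0 \<le> P" "P \<le> n * r" "0 \<le> P3" "P3 \<le> n * r^2" "0 \<le> Q" "Q \<le> (n*r)^2" "N \<ge> 0"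
  shows "P^3 * ((r/n)^4 * N) + (P3 * P) * ((r/n)^3 * N) + ((r/n)^2 * N * (8 * r * P) + n * (r * ((r/n)^4 * N)) * Q)
         \<le> 11 * r^7 / n * N"
proof -
  have rn: "0 \<le> r/n" using assms by simp
  have t1: "P^3 * ((r/n)^4 * N) \<le> (n*r)^3 * ((r/n)^4 * N)"
    by (rule mult_right_mono[OF power_mono]) (use assms rn in auto)
  have e1: "(n*r)^3 * ((r/n)^4 * N) = r^7 / n * N" using assms by (simp add: field_simps power_mult_distrib) (simp add: power_eq_if algebra_simps)
  have t2: "(P3 * P) * ((r/n)^3 * N) \<le> (n*r^2 * (n*r)) * ((r/n)^3 * N)"
    by (rule mult_right_mono[OF mult_mono]) (use assms rn in auto)
  have e2: "(n*r^2 * (n*r)) * ((r/n)^3 * N) = r^6 / n * N" using assms by (simp add: field_simps power_eq_if)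
  have t3: "(r/n)^2 * N * (8 * r * P) \<le> (r/n)^2 * N * (8 * r * (n*r))"
    by (rule mult_left_mono) (use assms rn in auto)
  have e3: "(r/n)^2 * N * (8 * r * (n*r)) = 8 * (r^4 / n * N)" using assms by (simp add: field_simps power_eq_if)
  have t4: "n * (r * ((r/n)^4 * N)) * Q \<le> n * (r * ((r/n)^4 * N)) * (n*r)^2"
    by (rule mult_left_mono) (use assms rn in auto)
  have e4: "n * (r * ((r/n)^4 * N)) * (n*r)^2 = r^7 / n * N" using assms by (simp add: field_simps power_eq_if)
  have r64: "r^6 \<le> r^7" "r^4 \<le> r^7" using assms by (auto intro: power_increasing)
  have "r^6 / n * N \<le> r^7 / n * N" "r^4 / n * N \<le> r^7 / n * N"
    using r64 assms by (auto intro!: mult_right_mono divide_right_mono)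
  moreover have "11 * r^7 / n * N = 11 * (r^7 / n * N)" by simp
  ultimately show ?thesis using t1 t2 t3 t4 e1 e2 e3 e4 by linarith
qed



context lay begin

lemma main_bound:
  "real (\<Sum>i\<in>{2..card A0}. card (A_layer A A0 i)) \<le> 11 * real r ^ 7 / real n * real ((n-2) choose (r-2))"
proof (cases "n = 0")
  case True
  have "A = {}"
  proof (rule ccontr)
    assume "A \<noteq> {}"
    then obtain v where "v \<in> A" by blast
    then show False using memA True r5 by force
  qed
  then have "A0 = {}" using A0A by blast
  then show ?thesis using True by simp
next
  case False
  have kr: "real k * real r \<le> real n" using kr_le by (metis of_nat_le_iff of_nat_mult)
  have P: "real (card P2) \<le> real n * real r"
  proof -
    have "real (card P2) \<le> real k * real r ^ 2" using card_P2 by (metis of_nat_le_iff of_nat_mult of_nat_power)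
    also have "\<dots> = (real k * real r) * real r" by (simp add: power2_eq_square)
    also have "\<dots> \<le> real n * real r" by (rule mult_right_mono[OF kr]) simp
    finally show ?thesis .
  qed
  have P3: "real (card P3) \<le> real n * real r ^ 2"
  proof -
    have "real (card P3) \<le> real k * real r ^ 3" using card_P3 by (metis of_nat_le_iff of_nat_mult of_nat_power)
    also have "\<dots> = (real k * real r) * real r ^ 2" by (simp add: power_eq_if)
    also have "\<dots> \<le> real n * real r ^ 2" by (rule mult_right_mono[OF kr]) simp
    finally show ?thesis .
  qed
  have Q: "real (card Q4) \<le> (real n * real r) ^ 2"
  proof -
    have "real (card Q4) \<le> real (card P2) ^ 2" using card_Q4 by (metis of_nat_le_iff of_nat_power)
    also have "\<dots> \<le> (real n * real r) ^ 2" by (rule power_mono[OF P]) simp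
    finally show ?thesis .
  qed
  have "real (\<Sum>i\<in>{2..card A0}. card (A_layer A A0 i)) \<le> real (card Bset)"
    using layers by (metis of_nat_le_iff)
  also have "\<dots> \<le> real (card P2) ^ 3 * (\<rho>^4 * real N) + (real (card P3) * real (card P2)) * (\<rho>^3 * real N)
     + (\<rho>^2 * real N * (8 * real r * real (card P2)) + real n * (real r * (\<rho>^4 * real N)) * real (card Q4))"
    using Bset_bound_raw by (simp add: D_def)
  also have "\<dots> \<le> 11 * real r ^ 7 / real n * real N"
    unfolding \<rho>_def by (rule final_arith) (use False r5 P P3 Q in auto)
  finally show ?thesis by (simp add: N_def)
qed

end

theorem lemma4:
  fixes r :: "nat \<Rightarrow> nat"
  assumes r_ge: "\<And>n. r n \<ge> 5"
    and r_small: "(\<lambda>n. real (r n)) \<in> o(\<lambda>n. real n powr (1/8))"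
  shows "\<exists>\<epsilon> :: nat \<Rightarrow> real. \<epsilon> \<longlonglongrightarrow> 0 \<and>
           (\<forall>n A A0. indep_Gnr1 n (r n) A \<and> max_disjoint_subfamily A A0 \<longrightarrow>
              real (\<Sum>i\<in>{2..card A0}. card (A_layer A A0 i))
                \<le> \<epsilon> n * real ((n - 2) choose (r n - 2)))"
proof (intro exI conjI allI impI)
  fix n A A0
  assume "indep_Gnr1 n (r n) A \<and> max_disjoint_subfamily A A0"
  then interpret lay n "r n" A A0 using r_ge by unfold_locales auto
  show "real (\<Sum>i\<in>{2..card A0}. card (A_layer A A0 i))
          \<le> (\<lambda>n. 11 * real (r n) ^ 7 / real n) n * real ((n - 2) choose (r n - 2))"
    using main_bound by simp
next
  show "(\<lambda>n. 11 * real (r n) ^ 7 / real n) \<longlonglongrightarrow> 0"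
  proof (rule tendsto_sandwich[where f = "\<lambda>_. 0" and h = "\<lambda>n. 11 * real n powr (-1/8)"])
    show "\<forall>\<^sub>F n in sequentially. 0 \<le> 11 * real (r n) ^ 7 / real n" by simp
    have ev1: "\<forall>\<^sub>F n in sequentially. norm (real (r n)) \<le> 1 * norm (real n powr (1/8))"
      using landau_o.smallD[OF r_small, of 1] by simp
    have ev2: "\<forall>\<^sub>F n in sequentially. n \<ge> 1" by (rule eventually_ge_at_top)
    show "\<forall>\<^sub>F n in sequentially. 11 * real (r n) ^ 7 / real n \<le> 11 * real n powr (-1/8)"
      using ev1 ev2
    proof eventually_elim
      case (elim n)
      have n0: "real n > 0" using elim by simp
      have "real (r n) \<le> real n powr (1/8)" using elim by simp
      then have "real (r n) ^ 7 \<le> (real n powr (1/8)) ^ 7" by (rule power_mono) simp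
      also have "\<dots> = real n powr (7/8)" using n0 by (simp add: powr_power)
      also have "\<dots> = real n powr (1 + -1/8)" by simp
      also have "\<dots> = real n powr (-1/8) * real n"
        using powr_mult_base[of "real n" "-1/8"] by (simp add: mult.commute)
      finally have "real (r n) ^ 7 / real n \<le> real n powr (-1/8)" using n0 by (simp add: divide_simps)
      then show ?case by simp
    qed
    show "(\<lambda>_. 0) \<longlonglongrightarrow> (0::real)" by simp
    show "(\<lambda>n. 11 * real n powr (-1/8)) \<longlonglongrightarrow> 0"
      using tendsto_mult_right_zero[OF tendsto_neg_powr[OF _ filterlim_real_sequentially], of "-1/8" 11] by simp
  qed
qed


end
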